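(* Let $d\in\mathbb{N}$, $\mathscr{a}\in\mathbb{R}$, $\mathscr{b}\in(\mathscr{a},\infty)$, for $u=(u_1,\dots,u_{d+1})\in\mathbb{R}^{d+1}$ let $I^u=\{x=(x_1,\dots,x_d)\in[\mathscr{a},\mathscr{b}]^d\colon u_{d+1}+\sum_{i=1}^d u_ix_i>0\}$, let $\lambda_d$ be the Lebesgue–Borel measure on $\mathbb{R}^d$, and let $v\in\mathbb{R}^{d+1}\setminus\{0\}$. Then $\limsup_{\mathbb{R}^{d+1}\ni u\to v}\lambda_d(I^u\,\Delta\, I^v)=0$.
   Context: $A\,\Delta\,B$ denotes the symmetric difference of sets $A$ and $B$. *)

theory Defs
  imports "HOL-Analysis.Analysis"
begin

text \<open>Points u = (u_1,...,u_d,u_{d+1}) of R^{d+1} are represented as pairs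
  (w, c) :: real^'n \<times> real, with w = (u_1,...,u_d) and c = u_{d+1}.\<close>

definition halfcube :: "real \<Rightarrow> real \<Rightarrow> ((real^'n) \<times> real) \<Rightarrow> (real^'n) set" where
  "halfcube a b u = {x. (\<forall>i. a \<le> x $ i \<and> x $ i \<le> b) \<and>
                        snd u + (\<Sum>i\<in>UNIV. fst u $ i * x $ i) > 0}"

definition symdiff :: "'a set \<Rightarrow> 'a set \<Rightarrow> 'a set" where
  "symdiff A B = (A - B) \<union> (B - A)"

end

theory Submission
  imports Defs
begin

lemma halfcube_alt: "halfcube a b u = cbox (vec a) (vec b) \<inter> {x. snd u + inner (fst u) x > 0}"
  by (auto simp: halfcube_def mem_box_cart inner_vec_def inner_real_def)

theorem lemma2p5:
  fixes a b :: real and v :: "(real^'n) \<times> real"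
  assumes "a < b" and "v \<noteq> 0"
  shows "Limsup (at v) (\<lambda>u. emeasure lborel (symdiff (halfcube a b u) (halfcube a b v))) = 0"
proof -
  define C :: "(real^'n) set" where "C = cbox (vec a) (vec b)"
  define f where "f = (\<lambda>(u::(real^'n) \<times> real) x. snd u + inner (fst u) x)"
  define S where "S = (\<lambda>N::nat. C \<inter> {x. \<bar>f v x\<bar> \<le> 1 / Suc N})"
  have contf: "continuous_on UNIV (f v)" unfolding f_def by (intro continuous_intros)
  have Sclosed: "closed (S N)" for N
    unfolding S_def C_def f_def
    by (intro closed_Int closed_cbox closed_Collect_le continuous_intros)
  have Ssets: "range S \<subseteq> sets lborel" using Sclosed by auto
  have Sdec: "decseq S"
  proof (rule decseq_SucI)
    fix n
    have "1 / real (Suc (Suc n)) \<le> 1 / real (Suc n)" by (intro divide_left_mono) auto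
    thus "S (Suc n) \<subseteq> S n" unfolding S_def by auto
  qed
  have Sfin: "emeasure lborel (S N) \<noteq> \<infinity>" for N
  proof -
    have "emeasure lborel (S N) \<le> emeasure lborel C"
      by (rule emeasure_mono) (auto simp: S_def C_def)
    also have "\<dots> < \<infinity>" unfolding C_def by (rule emeasure_lborel_cbox_finite)
    finally show ?thesis by simp
  qed
  let ?H = "{x. inner (fst v) x = - snd v}"
  have Hneg: "negligible ?H"
    using assms(2) by (intro negligible_hyperplane) (auto simp: prod_eq_iff)
  have Hclosed: "closed ?H" by (intro closed_Collect_eq continuous_intros)
  hence Hnull: "?H \<in> null_sets lborel"
    using Hneg null_sets_completion_iff[of ?H lborel] by (simp add: negligible_iff_null_sets)
  have inter: "(\<Inter> (range S)) \<subseteq> ?H"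
  proof
    fix x assume x: "x \<in> \<Inter> (range S)"
    have "\<bar>f v x\<bar> \<le> 1 / Suc N" for N using x by (auto simp: S_def)
    hence "\<not> \<bar>f v x\<bar> > 0"
      using reals_Archimedean[of "\<bar>f v x\<bar>"] by (auto simp: divide_inverse not_le[symmetric])
    thus "x \<in> ?H" by (simp add: f_def)
  qed
  have "emeasure lborel (\<Inter> (range S)) = 0"
  proof -
    have "closed (\<Inter> (range S))" using Sclosed by (intro closed_INT) auto
    hence "\<Inter> (range S) \<in> sets lborel" by simp
    thus ?thesis using inter Hnull null_sets_subset by blast
  qed
  hence lim: "(\<lambda>N. emeasure lborel (S N)) \<longlonglongrightarrow> 0"
    using Lim_emeasure_decseq[OF Ssets Sdec Sfin] by simp
  have h1: "\<bar>snd w\<bar> \<le> norm w" for w :: "(real^'n) \<times> real"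
    using norm_snd_le[of "snd w" "fst w"] by simp
  have h2: "norm (fst w) \<le> norm w" for w :: "(real^'n) \<times> real"
    using norm_fst_le[of "fst w" "snd w"] by simp
  obtain R where R: "R > 0" "\<And>x. x \<in> C \<Longrightarrow> norm x \<le> R"
    using bounded_pos[of C] unfolding C_def by auto
  have key: "\<forall>\<^sub>F u in at v. symdiff (halfcube a b u) (halfcube a b v) \<subseteq> S N" for N
  proof -
    have "\<forall>\<^sub>F u in at v. dist u v < 1 / (Suc N * (1 + R))"
      using R by (intro eventually_at_in_open' tendsto_ident_at[THEN tendstoD]) (auto intro: eventually_at_in_open' tendstoD)
    moreover have "symdiff (halfcube a b u) (halfcube a b v) \<subseteq> S N"
      if d: "dist u v < 1 / (Suc N * (1 + R))" for u
    proof
      fix x assume x: "x \<in> symdiff (halfcube a b u) (halfcube a b v)"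
      hence xC: "x \<in> C" and sg: "(f u x > 0) \<noteq> (f v x > 0)"
        by (auto simp: symdiff_def halfcube_alt C_def f_def)
      have "\<bar>f u x - f v x\<bar> = \<bar>snd (u - v) + inner (fst (u - v)) x\<bar>"
        by (simp add: f_def inner_diff_left)
      also have "\<dots> \<le> \<bar>snd (u - v)\<bar> + norm (fst (u - v)) * norm x"
        by (intro order_trans[OF abs_triangle_ineq] add_mono order_refl Cauchy_Schwarz_ineq2)
      also have "\<dots> \<le> dist u v + dist u v * R"
        using R(2)[OF xC] by (intro add_mono mult_mono)
          (auto simp: dist_norm simp del: snd_diff fst_diff intro: h1 h2)
      also have "\<dots> = dist u v * (1 + R)" by (simp add: algebra_simps)
      also have "\<dots> \<le> 1 / Suc N"
      proof -
        have p: "0 < real (Suc N) * (1 + R)" using R(1) by simp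
        have "dist u v * (real (Suc N) * (1 + R)) < 1" using d pos_less_divide_eq[OF p] by simp
        hence "dist u v * (1 + R) * real (Suc N) < 1" by (simp add: ac_simps)
        thus ?thesis by (simp add: pos_le_divide_eq)
      qed
      finally have "\<bar>f u x - f v x\<bar> \<le> 1 / Suc N" .
      moreover have "\<bar>f v x\<bar> \<le> \<bar>f u x - f v x\<bar>" using sg by auto
      ultimately show "x \<in> S N" using xC by (auto simp: S_def)
    qed
    ultimately show ?thesis by (rule eventually_mono)
  qed
  have "((\<lambda>u. emeasure lborel (symdiff (halfcube a b u) (halfcube a b v))) \<longlongrightarrow> 0) (at v)"
  proof (rule order_tendstoI)
    fix e :: ennreal assume "e < 0" thus "\<forall>\<^sub>F x in at v. e < emeasure lborel (symdiff (halfcube a b x) (halfcube a b v))" by simp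
  next
    fix e :: ennreal assume e: "0 < e"
    obtain N where N: "emeasure lborel (S N) < e"
      using order_tendstoD(2)[OF lim e] by (auto simp: eventually_sequentially)
    show "\<forall>\<^sub>F x in at v. emeasure lborel (symdiff (halfcube a b x) (halfcube a b v)) < e"
      using key[of N]
    proof (rule eventually_mono)
      fix u assume "symdiff (halfcube a b u) (halfcube a b v) \<subseteq> S N"
      hence "emeasure lborel (symdiff (halfcube a b u) (halfcube a b v)) \<le> emeasure lborel (S N)"
        using Ssets by (intro emeasure_mono) auto
      thus "emeasure lborel (symdiff (halfcube a b u) (halfcube a b v)) < e" using N by simp
    qed
  qed
  thus ?thesis by (intro lim_imp_Limsup) auto
qed
end
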